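(* Let $X=X_1\cdots X_n$ be uniformly distributed on $\{0,1\}^n$ (i.e. $X_i$ i.i.d. $\mathrm{Bernoulli}(1/2)$), and let $Y^1,\dots,Y^t$ be the outputs of $t$ independent deletion channels with deletion probability $\delta$ on input $X$. Let $y^1,\dots,y^t$ be observed traces with $\Pr(Y^1=y^1,\dots,Y^t=y^t)>0$, and write $I(w)=\langle y^1\uparrow\cdots\uparrow y^t,w\rangle$. Then for every $i\in\{1,\dots,n\}$, $$\Pr(X_i=1\mid Y^1=y^1,\dots,Y^t=y^t)=\frac{\displaystyle\sum_{k=0}^n 2^{n-k-1}\binom{n-1}{k}\sum_{w\in\{0,1\}^k}I(w)+\sum_{k=0}^n\sum_{j=1}^k 2^{n-k}\binom{i-1}{j-1}\binom{n-i}{k-j}\sum_{\substack{w\in\{0,1\}^k\\ w_j=1}}I(w)}{\displaystyle\sum_{k=0}^n 2^{n-k}\binom{n}{k}\sum_{w\in\{0,1\}^k}I(w)}.$$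
   Context: The deletion channel with deletion probability $\delta$ deletes each input symbol independently with probability $\delta$ and outputs the subsequence of undeleted symbols; the $t$ channels act independently given $X$. Classical binomial coefficients satisfy $\binom{a}{b}=0$ whenever $b>a$ or $b<0$. Infiltration coefficient: for binary sequences $f_1,\dots,f_t$ and $w$, $\langle f_1\uparrow\cdots\uparrow f_t,w\rangle$ is the number of tuples $(S_1,\dots,S_t)$ of subsets of $\{1,\dots,|w|\}$ such that $|S_j|=|f_j|$, the subsequence of $w$ indexed by $S_j$ equals $f_j$ for each $j$, and $S_1\cup\cdots\cup S_t=\{1,\dots,|w|\}$ (i.e. the number of ways to obtain $w$ as a supersequence of $f_1,\dots,f_t$ in which every symbol of $w$ is covered by at least one $f_j$). *)

theory Defs
  imports "HOL-Probability.Probability"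
begin

text \<open>Binary sequences are bool lists; True encodes the symbol 1.
  Positions are 0-based internally: the paper's X_i is x ! (i - 1).\<close>

fun del_chan :: "real \<Rightarrow> bool list \<Rightarrow> bool list pmf" where
  "del_chan d [] = return_pmf []"
| "del_chan d (x # xs) =
     bernoulli_pmf d \<bind> (\<lambda>del. del_chan d xs \<bind> (\<lambda>ys.
       return_pmf (if del then ys else x # ys)))"

fun traces :: "real \<Rightarrow> nat \<Rightarrow> bool list \<Rightarrow> bool list list pmf" where
  "traces d 0 x = return_pmf []"
| "traces d (Suc t) x =
     del_chan d x \<bind> (\<lambda>y. traces d t x \<bind> (\<lambda>ys. return_pmf (y # ys)))"

definition joint :: "real \<Rightarrow> nat \<Rightarrow> nat \<Rightarrow> (bool list \<times> bool list list) pmf" where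
  "joint d n t =
     pmf_of_set {xs :: bool list. length xs = n} \<bind> (\<lambda>x.
       traces d t x \<bind> (\<lambda>ys. return_pmf (x, ys)))"

text \<open>Infiltration coefficient <f_1 \<up> ... \<up> f_t, w> for the list fs = [f_1,...,f_t];
  index sets are subsets of {0..<length w} (0-based positions).\<close>
definition infil :: "bool list list \<Rightarrow> bool list \<Rightarrow> nat" where
  "infil fs w = card {Ss :: nat set list. length Ss = length fs \<and>
      (\<forall>j < length fs. Ss ! j \<subseteq> {0..<length w} \<and> card (Ss ! j) = length (fs ! j)
                       \<and> nths w (Ss ! j) = fs ! j) \<and>
      \<Union> (set Ss) = {0..<length w}}"

end

theory Submission
  imports Defs
begin


fun emb :: "'a list \<Rightarrow> 'a list \<Rightarrow> nat" where
  "emb [] z = (if z = [] then 1 else 0)"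
| "emb (a # x) [] = 1"
| "emb (a # x) (b # z) = emb x (b # z) + (if a = b then emb x z else 0)"

lemma emb_Nil2[simp]: "emb x [] = 1"
  by (cases x) auto

lemma emb_Cons: "emb (a # x) z = emb x z + (if z \<noteq> [] \<and> hd z = a then emb x (tl z) else 0)"
  by (cases z) auto

lemma emb_long: "length z > length x \<Longrightarrow> emb x z = 0"
proof (induction x arbitrary: z)
  case Nil then show ?case by auto
next
  case (Cons a x)
  then show ?case by (cases z) auto
qed

lemma pmf_bind_bern:
  assumes "0 \<le> d" "d \<le> 1"
  shows "pmf (bernoulli_pmf d \<bind> g) z = d * pmf (g True) z + (1 - d) * pmf (g False) z"
  using assms by (simp add: pmf_bind)

lemma pmf_map_Cons: "pmf (map_pmf (Cons a) M) z = (if z \<noteq> [] \<and> hd z = a then pmf M (tl z) else 0)"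
proof (cases "z \<noteq> [] \<and> hd z = a")
  case True
  then have "z = a # tl z" by auto
  then show ?thesis using True by (metis pmf_map_inj' list.inject inj_def)
next
  case False
  then have "z \<notin> set_pmf (map_pmf (Cons a) M)" by auto
  then have "pmf (map_pmf (Cons a) M) z = 0" by (simp add: pmf_eq_0_set_pmf)
  then show ?thesis using False by auto
qed

lemma pmf_del_chan:
  assumes "0 \<le> d" "d \<le> 1"
  shows "pmf (del_chan d x) z = d ^ (length x - length z) * (1 - d) ^ length z * real (emb x z)"
proof (induction x arbitrary: z)
  case Nil
  then show ?case by (auto simp: pmf_return indicator_def)
next
  case (Cons a xs)
  have e2: "del_chan d xs \<bind> (\<lambda>ys. return_pmf (a # ys)) = map_pmf (Cons a) (del_chan d xs)"
    by (simp add: map_pmf_def)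
  have "pmf (del_chan d (a # xs)) z = d * pmf (del_chan d xs) z + (1 - d) * pmf (map_pmf (Cons a) (del_chan d xs)) z"
    using assms by (simp add: pmf_bind_bern e2 bind_return_pmf')
  also have "\<dots> = d ^ (length (a # xs) - length z) * (1 - d) ^ length z * real (emb (a # xs) z)"
  proof (cases z)
    case Nil
    then show ?thesis using Cons by (simp add: pmf_map_Cons)
  next
    case (Cons b z')
    show ?thesis
    proof (cases "length z \<le> length xs")
      case True
      then obtain q where q: "length xs - length z' = Suc q" "length xs - length z = q"
        using Cons by (metis Suc_diff_le diff_Suc_Suc length_Cons)
      show ?thesis using Cons.IH Cons q
        by (cases "a = b") (simp_all add: pmf_map_Cons algebra_simps)
    next
      case False
      then have "emb xs z = 0" by (simp add: emb_long)
      then show ?thesis using Cons.IH Cons False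
        by (auto simp: pmf_map_Cons algebra_simps)
    qed
  qed
  finally show ?case .
qed



lemma traces_Suc_map: "traces d (Suc t) x = map_pmf (\<lambda>(a, b). a # b) (pair_pmf (del_chan d x) (traces d t x))"
  by (simp add: pair_pmf_def map_pmf_def bind_assoc_pmf bind_return_pmf)

lemma pmf_traces:
  "pmf (traces d t x) ys = (if length ys = t then (\<Prod>j<t. pmf (del_chan d x) (ys ! j)) else 0)"
proof (induction t arbitrary: ys)
  case 0
  then show ?case by (auto simp: pmf_return indicator_def)
next
  case (Suc t)
  have inj: "inj (\<lambda>(a::bool list, b::bool list list). a # b)"
    by (auto simp: inj_def)
  show ?case
  proof (cases ys)
    case Nil
    then have "ys \<notin> set_pmf (traces d (Suc t) x)" by (auto simp: traces_Suc_map)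
    then show ?thesis using Nil by (simp add: pmf_eq_0_set_pmf)
  next
    case (Cons z zs)
    have "pmf (traces d (Suc t) x) ys = pmf (pair_pmf (del_chan d x) (traces d t x)) (z, zs)"
      unfolding traces_Suc_map Cons using pmf_map_inj'[OF inj, of _ "(z, zs)"] by simp
    also have "\<dots> = pmf (del_chan d x) z * pmf (traces d t x) zs" by (simp add: pmf_pair)
    finally show ?thesis using Suc.IH Cons unfolding prod.lessThan_Suc_shift by simp
  qed
qed

abbreviation L :: "nat \<Rightarrow> bool list set" where "L n \<equiv> {xs. length xs = n}"

lemma finite_L[simp]: "finite (L n)"
  using finite_lists_length_eq[of "UNIV :: bool set" n] by simp

lemma finite_Lle[simp]: "finite {xs :: bool list. length xs \<le> n}"
  using finite_lists_length_le[of "UNIV :: bool set" n] by simp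

lemma L_Suc: "L (Suc n) = Cons True ` L n \<union> Cons False ` L n"
proof -
  have "xs \<in> Cons True ` L n \<union> Cons False ` L n" if "length xs = Suc n" for xs
    using that by (cases xs) auto
  then show ?thesis by auto
qed

lemma sum_L_Suc: "(\<Sum>x\<in>L (Suc n). f x) = (\<Sum>x\<in>L n. f (True # x) + f (False # x))"
proof -
  have "(\<Sum>x\<in>L (Suc n). f x) = (\<Sum>x\<in>Cons True ` L n. f x) + (\<Sum>x\<in>Cons False ` L n. f x)"
    unfolding L_Suc by (rule sum.union_disjoint) auto
  also have "\<dots> = (\<Sum>x\<in>L n. f (True # x)) + (\<Sum>x\<in>L n. f (False # x))"
    by (simp add: sum.reindex)
  finally show ?thesis by (simp add: sum.distrib)
qed

lemma L_0: "L 0 = {[]}" by auto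

lemma sum_L_app: "(\<Sum>z\<in>L (a + b). f z) = (\<Sum>u\<in>L a. \<Sum>v\<in>L b. f (u @ v))"
proof (induction a arbitrary: f)
  case 0
  then show ?case by (simp add: L_0)
next
  case (Suc a)
  have "(\<Sum>z\<in>L (Suc a + b). f z) = (\<Sum>z\<in>L (a + b). f (True # z) + f (False # z))"
    by (simp add: sum_L_Suc)
  also have "\<dots> = (\<Sum>u\<in>L a. \<Sum>v\<in>L b. f (True # u @ v) + f (False # u @ v))"
    by (rule Suc.IH)
  also have "\<dots> = (\<Sum>u\<in>L (Suc a). \<Sum>v\<in>L b. f (u @ v))"
    by (simp add: sum_L_Suc sum.distrib)
  finally show ?case .
qed

lemma sum_Lle: "(\<Sum>w\<in>{w :: bool list. length w \<le> n}. f w) = (\<Sum>k=0..n. \<Sum>w\<in>L k. f w)"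
proof (induction n)
  case 0
  then show ?case by simp
next
  case (Suc n)
  have e: "{w :: bool list. length w \<le> Suc n} = {w. length w \<le> n} \<union> L (Suc n)" by auto
  have "(\<Sum>w\<in>{w :: bool list. length w \<le> Suc n}. f w) = (\<Sum>w\<in>{w. length w \<le> n}. f w) + (\<Sum>w\<in>L (Suc n). f w)"
    unfolding e by (rule sum.union_disjoint) auto
  then show ?case using Suc by simp
qed

lemma sum_emb: "(\<Sum>x\<in>L n. real (emb x w)) = 2 ^ (n - length w) * real (n choose length w)"
proof (induction n arbitrary: w)
  case 0
  then show ?case by (cases w) (auto simp: L_0)
next
  case (Suc n)
  have "(\<Sum>x\<in>L (Suc n). real (emb x w)) = (\<Sum>x\<in>L n. real (emb (True # x) w) + real (emb (False # x) w))"
    by (simp add: sum_L_Suc)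
  also have "\<dots> = 2 * (\<Sum>x\<in>L n. real (emb x w)) + (if w \<noteq> [] then (\<Sum>x\<in>L n. real (emb x (tl w))) else 0)"
    by (cases w; cases "hd w") (auto simp: emb_Cons sum.distrib sum_distrib_left)
  also have "\<dots> = 2 ^ (Suc n - length w) * real (Suc n choose length w)"
  proof (cases w)
    case Nil
    then show ?thesis using Suc.IH[of w] by simp
  next
    case (Cons b w')
    show ?thesis
    proof (cases "length w' < n")
      case True
      then obtain q where q: "n - length w' = Suc q" "n - length w = q" using Cons
        by (metis Suc_diff_Suc length_Cons)
      show ?thesis using Suc.IH[of w] Suc.IH[of w'] Cons q by (simp add: algebra_simps)
    next
      case False
      then have "n choose length w = 0" using Cons by simp
      then show ?thesis using Suc.IH[of w] Suc.IH[of w'] Cons False by (simp add: algebra_simps)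
    qed
  qed
  finally show ?case .
qed



definition Mset :: "bool \<Rightarrow> bool list list \<Rightarrow> nat set" where
  "Mset b y = {j. j < length y \<and> y ! j \<noteq> [] \<and> hd (y ! j) = b}"

definition upd :: "nat set \<Rightarrow> bool list list \<Rightarrow> bool list list" where
  "upd J y = map (\<lambda>j. if j \<in> J then tl (y ! j) else y ! j) [0..<length y]"

definition Tset :: "bool list list \<Rightarrow> bool list \<Rightarrow> nat set list set" where
  "Tset y w = {Ss. length Ss = length y \<and>
      (\<forall>j < length y. Ss ! j \<subseteq> {0..<length w} \<and> nths w (Ss ! j) = y ! j) \<and>
      \<Union> (set Ss) = {0..<length w}}"

definition build :: "nat set \<Rightarrow> nat set list \<Rightarrow> nat set list" where
  "build J Ss = map (\<lambda>j. (if j \<in> J then {0} else {}) \<union> Suc ` (Ss ! j)) [0..<length Ss]"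

lemma length_upd[simp]: "length (upd J y) = length y" by (simp add: upd_def)
lemma nth_upd[simp]: "j < length y \<Longrightarrow> upd J y ! j = (if j \<in> J then tl (y ! j) else y ! j)"
  by (simp add: upd_def)
lemma upd_empty[simp]: "upd {} y = y" by (simp add: upd_def map_nth)
lemma length_build[simp]: "length (build J Ss) = length Ss" by (simp add: build_def)
lemma nth_build[simp]: "j < length Ss \<Longrightarrow> build J Ss ! j = (if j \<in> J then {0} else {}) \<union> Suc ` (Ss ! j)"
  by (simp add: build_def)

lemma mem_Union_set: "x \<in> \<Union> (set Ss) \<longleftrightarrow> (\<exists>j<length Ss. x \<in> Ss ! j)"
proof
  assume "x \<in> \<Union> (set Ss)"
  then obtain X where "X \<in> set Ss" "x \<in> X" by blast
  then show "\<exists>j<length Ss. x \<in> Ss ! j" by (metis in_set_conv_nth)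
next
  assume "\<exists>j<length Ss. x \<in> Ss ! j"
  then show "x \<in> \<Union> (set Ss)" using nth_mem by blast
qed

lemma infil_Tset: "infil y w = card (Tset y w)"
proof -
  have "S \<subseteq> {0..<length w} \<Longrightarrow> card S = length (nths w S)" for S
  proof -
    assume "S \<subseteq> {0..<length w}"
    then have "{i. i < length w \<and> i \<in> S} = S" by auto
    then show ?thesis by (simp add: length_nths)
  qed
  note h = this
  have eq: "{Ss :: nat set list. length Ss = length y \<and>
      (\<forall>j < length y. Ss ! j \<subseteq> {0..<length w} \<and> card (Ss ! j) = length (y ! j)
                       \<and> nths w (Ss ! j) = y ! j) \<and>
      \<Union> (set Ss) = {0..<length w}} = Tset y w"
    unfolding Tset_def
  proof (intro Collect_cong conj_cong refl)
    fix Ss :: "nat set list"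
    show "(\<forall>j<length y. Ss ! j \<subseteq> {0..<length w} \<and> card (Ss ! j) = length (y ! j) \<and> nths w (Ss ! j) = y ! j)
       = (\<forall>j<length y. Ss ! j \<subseteq> {0..<length w} \<and> nths w (Ss ! j) = y ! j)"
    proof (intro iffI allI impI)
      fix j assume "\<forall>j<length y. Ss ! j \<subseteq> {0..<length w} \<and> card (Ss ! j) = length (y ! j) \<and> nths w (Ss ! j) = y ! j" "j < length y"
      then show "Ss ! j \<subseteq> {0..<length w} \<and> nths w (Ss ! j) = y ! j" by blast
    next
      fix j assume a: "\<forall>j<length y. Ss ! j \<subseteq> {0..<length w} \<and> nths w (Ss ! j) = y ! j" "j < length y"
      then have "Ss ! j \<subseteq> {0..<length w}" "nths w (Ss ! j) = y ! j" by auto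
      then show "Ss ! j \<subseteq> {0..<length w} \<and> card (Ss ! j) = length (y ! j) \<and> nths w (Ss ! j) = y ! j"
        using h by metis
    qed
  qed
  show ?thesis by (simp only: infil_def eq)
qed

lemma finite_Tset: "finite (Tset y w)"
proof (rule finite_subset)
  show "Tset y w \<subseteq> {Ss. set Ss \<subseteq> Pow {0..<length w} \<and> length Ss = length y}"
  proof
    fix Ss assume "Ss \<in> Tset y w"
    then have "length Ss = length y" "\<Union>(set Ss) = {0..<length w}" by (simp_all add: Tset_def)
    then show "Ss \<in> {Ss. set Ss \<subseteq> Pow {0..<length w} \<and> length Ss = length y}" by blast
  qed
  show "finite {Ss. set Ss \<subseteq> Pow {0..<length w} \<and> length Ss = length y}"
    by (rule finite_lists_length_eq) simp
qed

lemma infil_Nil: "infil y [] = (if \<forall>j<length y. y ! j = [] then 1 else 0)"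
proof -
  have "Tset y [] = (if \<forall>j<length y. y ! j = [] then {replicate (length y) {}} else {})"
  proof (cases "\<forall>j<length y. y ! j = []")
    case True
    have "Ss = replicate (length y) {}" if "Ss \<in> Tset y []" for Ss
    proof -
      have "length Ss = length y" "\<forall>j<length y. Ss ! j \<subseteq> {}"
        using that by (simp_all add: Tset_def)
      then show ?thesis by (simp add: list_eq_iff_nth_eq)
    qed
    moreover have "replicate (length y) {} \<in> Tset y []"
      using True unfolding Tset_def by simp
    ultimately have "Tset y [] = {replicate (length y) {}}" by blast
    then show ?thesis using True by simp
  next
    case False
    then obtain j where "j < length y" "y ! j \<noteq> []" by auto
    then have "Ss \<notin> Tset y []" for Ss unfolding Tset_def by force
    then have "Tset y [] = {}" by blast
    then show ?thesis using False by simp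
  qed
  then show ?thesis by (simp add: infil_Tset)
qed

lemma build_in:
  assumes J: "J \<in> Pow (Mset b y) - {{}}" and S: "Ss \<in> Tset (upd J y) w"
  shows "build J Ss \<in> Tset y (b # w)"
proof -
  have JM: "J \<subseteq> Mset b y" "J \<noteq> {}" using J by auto
  have len: "length Ss = length y" using S by (simp add: Tset_def)
  have Sj: "Ss ! j \<subseteq> {0..<length w}" "nths w (Ss ! j) = (if j \<in> J then tl (y ! j) else y ! j)"
    if "j < length y" for j using S that by (auto simp: Tset_def)
  have U: "\<Union> (set Ss) = {0..<length w}" using S by (simp add: Tset_def)
  have e: "{k. Suc k \<in> (if j \<in> J then {0} else {}) \<union> Suc ` A} = A" for j and A :: "nat set" by auto
  have e2: "{k. Suc k \<in> Suc ` A} = A" for A :: "nat set" by auto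
  have part2: "build J Ss ! j \<subseteq> {0..<length (b # w)} \<and> nths (b # w) (build J Ss ! j) = y ! j"
    if j: "j < length y" for j
  proof
    show "build J Ss ! j \<subseteq> {0..<length (b # w)}" using Sj(1)[OF j] j len by auto
    have "nths (b # w) (build J Ss ! j) = (if j \<in> J then [b] else []) @ (if j \<in> J then tl (y ! j) else y ! j)"
      using j len Sj(2)[OF j] by (simp add: nths_Cons e e2)
    also have "\<dots> = y ! j"
    proof (cases "j \<in> J")
      case True
      then have "y ! j \<noteq> [] \<and> hd (y ! j) = b" using JM(1) by (auto simp: Mset_def)
      then show ?thesis using True by (cases "y ! j") auto
    qed simp
    finally show "nths (b # w) (build J Ss ! j) = y ! j" .
  qed
  have part3: "\<Union> (set (build J Ss)) = {0..<length (b # w)}"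
  proof (rule set_eqI)
    fix x
    show "x \<in> \<Union> (set (build J Ss)) \<longleftrightarrow> x \<in> {0..<length (b # w)}"
    proof (cases x)
      case 0
      obtain j where "j \<in> J" using JM(2) by auto
      then have "j < length y" using JM(1) by (auto simp: Mset_def)
      then show ?thesis using 0 \<open>j \<in> J\<close> len unfolding mem_Union_set by auto
    next
      case (Suc k)
      have "x \<in> \<Union> (set (build J Ss)) \<longleftrightarrow> k \<in> \<Union> (set Ss)"
        using Suc unfolding mem_Union_set by (fastforce split: if_splits)
      then show ?thesis using U Suc by auto
    qed
  qed
  show ?thesis unfolding Tset_def using len part2 part3 by auto
qed

lemma split_S: "(if 0 \<in> S then {0} else {}) \<union> Suc ` {k. Suc k \<in> S} = (S :: nat set)"
proof (rule set_eqI)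
  fix x show "x \<in> (if 0 \<in> S then {0} else {}) \<union> Suc ` {k. Suc k \<in> S} \<longleftrightarrow> x \<in> S"
    by (cases x) auto
qed

lemma Tset_Cons: "Tset y (b # w) = (\<Union>J\<in>Pow (Mset b y) - {{}}. build J ` Tset (upd J y) w)"
proof
  show "(\<Union>J\<in>Pow (Mset b y) - {{}}. build J ` Tset (upd J y) w) \<subseteq> Tset y (b # w)"
  proof (rule UN_least)
    fix J assume J: "J \<in> Pow (Mset b y) - {{}}"
    show "build J ` Tset (upd J y) w \<subseteq> Tset y (b # w)" using build_in[OF J] by blast
  qed
next
  show "Tset y (b # w) \<subseteq> (\<Union>J\<in>Pow (Mset b y) - {{}}. build J ` Tset (upd J y) w)"
  proof
    fix Ss assume S: "Ss \<in> Tset y (b # w)"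
    define J where "J = {j. j < length y \<and> 0 \<in> Ss ! j}"
    define Ss' where "Ss' = map (\<lambda>S. {k. Suc k \<in> S}) Ss"
    have len: "length Ss = length y" using S by (simp add: Tset_def)
    have Sall: "\<forall>j<length y. Ss ! j \<subseteq> {0..<Suc (length w)} \<and> nths (b # w) (Ss ! j) = y ! j"
      using S by (simp add: Tset_def)
    have Sj: "Ss ! j \<subseteq> {0..<Suc (length w)}" "nths (b # w) (Ss ! j) = y ! j"
      if "j < length y" for j using Sall that by blast+
    have U: "\<Union> (set Ss) = {0..<Suc (length w)}" using S by (simp add: Tset_def)
    have yj: "y ! j = (if 0 \<in> Ss ! j then [b] else []) @ nths w (Ss' ! j)" if "j < length y" for j
      using Sj(2)[OF that] that len by (simp add: nths_Cons Ss'_def)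
    have eq: "build J Ss' = Ss"
    proof (rule nth_equalityI)
      show "length (build J Ss') = length Ss" by (simp add: Ss'_def)
      fix j assume "j < length (build J Ss')"
      then have j: "j < length y" by (simp add: Ss'_def len)
      have a1: "Ss' ! j = {k. Suc k \<in> Ss ! j}" using j len by (simp add: Ss'_def)
      have a2: "(j \<in> J) = (0 \<in> Ss ! j)" using j by (simp add: J_def)
      have "build J Ss' ! j = (if j \<in> J then {0} else {}) \<union> Suc ` (Ss' ! j)"
        using j len by (simp add: Ss'_def)
      also have "\<dots> = Ss ! j" unfolding a1 a2 by (rule split_S)
      finally show "build J Ss' ! j = Ss ! j" .
    qed
    have JM: "J \<subseteq> Mset b y"
    proof
      fix j assume "j \<in> J"
      then have j: "j < length y" "0 \<in> Ss ! j" by (simp_all add: J_def)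
      then show "j \<in> Mset b y" using yj[OF j(1)] by (simp add: Mset_def)
    qed
    have Jne: "J \<noteq> {}"
    proof -
      have "0 \<in> {0..<Suc (length w)}" by simp
      then have "0 \<in> \<Union> (set Ss)" unfolding U .
      then have "\<exists>j<length Ss. 0 \<in> Ss ! j" unfolding mem_Union_set .
      then obtain j where "j < length Ss" "0 \<in> Ss ! j" by blast
      then have "j \<in> J" using len unfolding J_def by simp
      then show ?thesis by blast
    qed
    have "Ss' \<in> Tset (upd J y) w"
    proof -
      have a: "length Ss' = length (upd J y)" by (simp add: Ss'_def len)
      have b: "Ss' ! j \<subseteq> {0..<length w} \<and> nths w (Ss' ! j) = upd J y ! j" if j: "j < length (upd J y)" for j
      proof
        show "Ss' ! j \<subseteq> {0..<length w}" using Sj(1)[of j] j len by (auto simp: Ss'_def)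
        show "nths w (Ss' ! j) = upd J y ! j" using yj[of j] j by (auto simp: J_def)
      qed
      have c: "\<Union> (set Ss') = {0..<length w}"
      proof (rule set_eqI)
        fix k
        have "k \<in> \<Union> (set Ss') \<longleftrightarrow> Suc k \<in> \<Union> (set Ss)"
          unfolding mem_Union_set by (auto simp: Ss'_def)
        then show "k \<in> \<Union> (set Ss') \<longleftrightarrow> k \<in> {0..<length w}" using U by auto
      qed
      show ?thesis unfolding Tset_def using a b c by blast
    qed
    show "Ss \<in> (\<Union>J\<in>Pow (Mset b y) - {{}}. build J ` Tset (upd J y) w)"
    proof (rule UN_I)
      show "J \<in> Pow (Mset b y) - {{}}" using JM Jne by blast
      show "Ss \<in> build J ` Tset (upd J y) w" using eq \<open>Ss' \<in> Tset (upd J y) w\<close> by blast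
    qed
  qed
qed

lemma build_inj: "build J A = build J B \<Longrightarrow> A = B"
proof -
  assume h: "build J A = build J B"
  have e: "{k. Suc k \<in> (if j \<in> J then {0} else {}) \<union> Suc ` S} = S" for j and S :: "nat set" by auto
  have "length A = length B" using arg_cong[OF h, of length] by simp
  moreover have "A ! j = B ! j" if "j < length A" for j
  proof -
    have "build J A ! j = build J B ! j" using h by simp
    then have "{k. Suc k \<in> build J A ! j} = {k. Suc k \<in> build J B ! j}" by simp
    then show ?thesis using that \<open>length A = length B\<close> by (simp only: nth_build e)
  qed
  ultimately show "A = B" by (rule nth_equalityI)
qed

lemma build_J: "build J1 A = build J2 B \<Longrightarrow> J1 \<subseteq> {..<length A} \<Longrightarrow> J2 \<subseteq> {..<length B} \<Longrightarrow> J1 = J2"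
proof -
  assume h: "build J1 A = build J2 B" and s: "J1 \<subseteq> {..<length A}" "J2 \<subseteq> {..<length B}"
  have l: "length A = length B" using arg_cong[OF h, of length] by simp
  have "j \<in> J1 \<longleftrightarrow> j \<in> J2" if "j < length A" for j
  proof -
    have "build J1 A ! j = build J2 B ! j" using h by simp
    then have "(0 \<in> build J1 A ! j) = (0 \<in> build J2 B ! j)" by simp
    then show ?thesis using that l by (auto split: if_splits)
  qed
  then show ?thesis using s l by auto
qed

lemma infil_Cons: "infil y (b # w) = (\<Sum>J\<in>Pow (Mset b y) - {{}}. infil (upd J y) w)"
proof -
  have fin: "finite (Pow (Mset b y) - {{}})" by (simp add: Mset_def)
  have "card (Tset y (b # w)) = (\<Sum>J\<in>Pow (Mset b y) - {{}}. card (build J ` Tset (upd J y) w))"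
    unfolding Tset_Cons
  proof (rule card_UN_disjoint[OF fin])
    show "\<forall>J\<in>Pow (Mset b y) - {{}}. finite (build J ` Tset (upd J y) w)"
      using finite_Tset by blast
    show "\<forall>J1\<in>Pow (Mset b y) - {{}}. \<forall>J2\<in>Pow (Mset b y) - {{}}. J1 \<noteq> J2 \<longrightarrow>
            build J1 ` Tset (upd J1 y) w \<inter> build J2 ` Tset (upd J2 y) w = {}"
    proof (intro ballI impI)
      fix J1 J2 assume J: "J1 \<in> Pow (Mset b y) - {{}}" "J2 \<in> Pow (Mset b y) - {{}}" "J1 \<noteq> J2"
      show "build J1 ` Tset (upd J1 y) w \<inter> build J2 ` Tset (upd J2 y) w = {}"
      proof (rule ccontr)
        assume "build J1 ` Tset (upd J1 y) w \<inter> build J2 ` Tset (upd J2 y) w \<noteq> {}"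
        then obtain A B where AB: "A \<in> Tset (upd J1 y) w" "B \<in> Tset (upd J2 y) w" "build J1 A = build J2 B"
          by blast
        have "length A = length y" "length B = length y" using AB by (auto simp: Tset_def)
        moreover have "J1 \<subseteq> {..<length y}" "J2 \<subseteq> {..<length y}" using J by (auto simp: Mset_def)
        ultimately have "J1 = J2" using build_J[OF AB(3)] by simp
        then show False using J by simp
      qed
    qed
  qed
  also have "\<dots> = (\<Sum>J\<in>Pow (Mset b y) - {{}}. card (Tset (upd J y) w))"
  proof (rule sum.cong[OF refl], rule card_image, rule inj_onI)
    fix J A B assume "build J A = build J B"
    then show "A = B" by (rule build_inj)
  qed
  finally show ?thesis unfolding infil_Tset .
qed



lemma prod_emb_Cons:
  "(\<Prod>j<length y. emb (a # x) (y ! j)) = (\<Sum>J\<in>Pow (Mset a y). \<Prod>j<length y. emb x (upd J y ! j))"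
proof -
  define t where "t = length y"
  define g where "g j = (if y ! j \<noteq> [] \<and> hd (y ! j) = a then emb x (tl (y ! j)) else 0)" for j
  have MT: "Mset a y \<subseteq> {..<t}" by (auto simp: Mset_def t_def)
  have "(\<Prod>j<t. emb (a # x) (y ! j)) = (\<Prod>j<t. g j + emb x (y ! j))"
    by (simp add: emb_Cons g_def add.commute)
  also have "\<dots> = (\<Sum>X\<in>Pow {..<t}. (\<Prod>j\<in>X. g j) * (\<Prod>j\<in>{..<t}-X. emb x (y ! j)))"
    by (rule prod_add) simp
  also have "\<dots> = (\<Sum>X\<in>Pow (Mset a y). (\<Prod>j\<in>X. g j) * (\<Prod>j\<in>{..<t}-X. emb x (y ! j)))"
  proof (rule sum.mono_neutral_right)
    show "finite (Pow {..<t})" by simp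
    show "Pow (Mset a y) \<subseteq> Pow {..<t}" using MT by blast
    show "\<forall>X\<in>Pow {..<t} - Pow (Mset a y). (\<Prod>j\<in>X. g j) * (\<Prod>j\<in>{..<t}-X. emb x (y ! j)) = 0"
    proof
      fix X assume X: "X \<in> Pow {..<t} - Pow (Mset a y)"
      then obtain j where j: "j \<in> X" "j \<notin> Mset a y" by blast
      then have "j < t" using X by blast
      then have "g j = 0" using j by (auto simp: g_def Mset_def t_def)
      moreover have "finite X" using X by (meson DiffD1 PowD finite_lessThan finite_subset)
      ultimately have "(\<Prod>j\<in>X. g j) = 0" using j(1) by (meson prod_zero)
      then show "(\<Prod>j\<in>X. g j) * (\<Prod>j\<in>{..<t}-X. emb x (y ! j)) = 0" by simp
    qed
  qed
  also have "\<dots> = (\<Sum>X\<in>Pow (Mset a y). \<Prod>j<t. emb x (upd X y ! j))"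
  proof (rule sum.cong[OF refl])
    fix X assume "X \<in> Pow (Mset a y)"
    then have XM: "X \<subseteq> Mset a y" by blast
    then have Xt: "X \<subseteq> {..<t}" using MT by blast
    have "(\<Prod>j<t. emb x (upd X y ! j)) = (\<Prod>j<t. if j \<in> X then emb x (tl (y ! j)) else emb x (y ! j))"
      by (rule prod.cong) (auto simp: t_def)
    also have "\<dots> = (\<Prod>j\<in>{..<t} \<inter> {j. j \<in> X}. emb x (tl (y ! j))) * (\<Prod>j\<in>{..<t} \<inter> - {j. j \<in> X}. emb x (y ! j))"
      by (rule prod.If_cases) simp
    also have "{..<t} \<inter> {j. j \<in> X} = X" using Xt by blast
    also have "{..<t} \<inter> - {j. j \<in> X} = {..<t} - X" by blast
    also have "(\<Prod>j\<in>X. emb x (tl (y ! j))) = (\<Prod>j\<in>X. g j)"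
      by (rule prod.cong) (use XM in \<open>auto simp: g_def Mset_def\<close>)
    finally show "(\<Prod>j\<in>X. g j) * (\<Prod>j\<in>{..<t}-X. emb x (y ! j)) = (\<Prod>j<t. emb x (upd X y ! j))" ..
  qed
  finally show ?thesis by (simp add: t_def)
qed

lemma sum_Cons_reindex:
  "(\<Sum>w\<in>{w :: bool list. length w \<le> Suc N}. if w \<noteq> [] \<and> hd w = a then f w else 0)
   = (\<Sum>w\<in>{w. length w \<le> N}. f (a # w))"
proof -
  have "(\<Sum>w\<in>{w :: bool list. length w \<le> Suc N}. if w \<noteq> [] \<and> hd w = a then f w else 0)
      = (\<Sum>w\<in>{w \<in> {w :: bool list. length w \<le> Suc N}. w \<noteq> [] \<and> hd w = a}. f w)"
    by (rule sum.inter_filter[symmetric]) simp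
  also have "{w \<in> {w :: bool list. length w \<le> Suc N}. w \<noteq> [] \<and> hd w = a} = Cons a ` {w. length w \<le> N}"
  proof
    show "{w \<in> {w :: bool list. length w \<le> Suc N}. w \<noteq> [] \<and> hd w = a} \<subseteq> Cons a ` {w. length w \<le> N}"
    proof
      fix w :: "bool list" assume "w \<in> {w \<in> {w. length w \<le> Suc N}. w \<noteq> [] \<and> hd w = a}"
      then show "w \<in> Cons a ` {w. length w \<le> N}" by (cases w) auto
    qed
  qed auto
  also have "(\<Sum>w\<in>Cons a ` {w. length w \<le> N}. f w) = (\<Sum>w\<in>{w. length w \<le> N}. f (a # w))"
    by (rule sum.reindex_cong[where l = "Cons a"]) auto
  finally show ?thesis .
qed

lemma prod_infil:
  "length x \<le> N \<Longrightarrow> (\<Prod>j<length y. emb x (y ! j)) = (\<Sum>w\<in>{w :: bool list. length w \<le> N}. infil y w * emb x w)"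
proof (induction x arbitrary: y N)
  case Nil
  have "(\<Prod>j<length y. emb [] (y ! j)) = (if \<forall>j<length y. y ! j = [] then 1 else 0)"
  proof (cases "\<forall>j<length y. y ! j = []")
    case True
    then show ?thesis by simp
  next
    case False
    then obtain j where "j < length y" "y ! j \<noteq> []" by auto
    then show ?thesis using False by (intro trans[OF prod_zero]) auto
  qed
  also have "\<dots> = infil y []" by (simp add: infil_Nil)
  also have "\<dots> = (\<Sum>w\<in>{w :: bool list. length w \<le> N}. if w = [] then infil y w else 0)"
    by (simp add: sum.delta')
  also have "\<dots> = (\<Sum>w\<in>{w :: bool list. length w \<le> N}. infil y w * emb [] w)"
    by (rule sum.cong) auto
  finally show ?case .
next
  case (Cons a x)
  obtain N' where N: "N = Suc N'" "length x \<le> N'" using Cons.prems by (cases N) auto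
  have "(\<Prod>j<length y. emb (a # x) (y ! j)) = (\<Sum>J\<in>Pow (Mset a y). \<Prod>j<length y. emb x (upd J y ! j))"
    by (rule prod_emb_Cons)
  also have "\<dots> = (\<Prod>j<length y. emb x (upd {} y ! j)) + (\<Sum>J\<in>Pow (Mset a y) - {{}}. \<Prod>j<length y. emb x (upd J y ! j))"
    by (rule sum.remove) (auto simp: Mset_def)
  also have "(\<Prod>j<length y. emb x (upd {} y ! j)) = (\<Sum>w\<in>{w :: bool list. length w \<le> N}. infil y w * emb x w)"
    using Cons.IH[of N y] N by simp
  also have "(\<Sum>J\<in>Pow (Mset a y) - {{}}. \<Prod>j<length y. emb x (upd J y ! j))
     = (\<Sum>J\<in>Pow (Mset a y) - {{}}. \<Sum>w\<in>{w :: bool list. length w \<le> N'}. infil (upd J y) w * emb x w)"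
  proof (rule sum.cong[OF refl])
    fix J
    show "(\<Prod>j<length y. emb x (upd J y ! j)) = (\<Sum>w\<in>{w :: bool list. length w \<le> N'}. infil (upd J y) w * emb x w)"
      using Cons.IH[of N' "upd J y"] N by simp
  qed
  also have "\<dots> = (\<Sum>w\<in>{w :: bool list. length w \<le> N'}. \<Sum>J\<in>Pow (Mset a y) - {{}}. infil (upd J y) w * emb x w)"
    by (rule sum.swap)
  also have "\<dots> = (\<Sum>w\<in>{w :: bool list. length w \<le> N'}. infil y (a # w) * emb x w)"
    by (simp add: infil_Cons sum_distrib_right)
  also have "\<dots> = (\<Sum>w\<in>{w :: bool list. length w \<le> N}. if w \<noteq> [] \<and> hd w = a then infil y w * emb x (tl w) else 0)"
    unfolding N(1) by (subst sum_Cons_reindex) simp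
  also have "(\<Sum>w\<in>{w :: bool list. length w \<le> N}. infil y w * emb x w) + \<dots>
     = (\<Sum>w\<in>{w :: bool list. length w \<le> N}. infil y w * emb (a # x) w)"
    by (subst sum.distrib[symmetric], rule sum.cong) (auto simp: emb_Cons algebra_simps)
  finally show ?case .
qed



definition spl :: "'a list \<Rightarrow> 'a list \<Rightarrow> 'a \<Rightarrow> 'a list \<Rightarrow> nat" where
  "spl u v c w = (\<Sum>j<length w. if w ! j = c then emb u (take j w) * emb v (drop (Suc j) w) else 0)"

lemma spl_Nil2[simp]: "spl u v c [] = 0" by (simp add: spl_def)

lemma spl_Nil1: "spl [] v c w = (if w \<noteq> [] \<and> hd w = c then emb v (tl w) else 0)"
proof (cases w)
  case Nil then show ?thesis by simp
next
  case (Cons b w')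
  have "spl [] v c w = (if b = c then emb v w' else 0) + (\<Sum>j<length w'. if w' ! j = c then emb [] (b # take j w') * emb v (drop (Suc j) w') else 0)"
    unfolding spl_def Cons by (simp only: length_Cons sum.lessThan_Suc_shift) (auto intro!: sum.cong)
  also have "(\<Sum>j<length w'. if w' ! j = c then emb [] (b # take j w') * emb v (drop (Suc j) w') else 0) = 0"
    by simp
  finally show ?thesis using Cons by simp
qed

lemma spl_Cons: "spl (a # u) v c (b # w') = spl u v c (b # w') + (if a = b then spl u v c w' else 0)"
proof -
  have "spl (a # u) v c (b # w') = (if b = c then emb v w' else 0) + (\<Sum>j<length w'. if w' ! j = c then emb (a # u) (b # take j w') * emb v (drop (Suc j) w') else 0)"
    unfolding spl_def by (simp only: length_Cons sum.lessThan_Suc_shift) (auto intro!: sum.cong)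
  also have "(\<Sum>j<length w'. if w' ! j = c then emb (a # u) (b # take j w') * emb v (drop (Suc j) w') else 0)
    = (\<Sum>j<length w'. if w' ! j = c then emb u (b # take j w') * emb v (drop (Suc j) w') else 0)
      + (if a = b then (\<Sum>j<length w'. if w' ! j = c then emb u (take j w') * emb v (drop (Suc j) w') else 0) else 0)"
    by (cases "a = b") (simp_all add: sum.distrib[symmetric] algebra_simps if_distrib cong: if_cong)
  also have "spl u v c (b # w') = (if b = c then emb v w' else 0) + (\<Sum>j<length w'. if w' ! j = c then emb u (b # take j w') * emb v (drop (Suc j) w') else 0)"
    unfolding spl_def by (simp only: length_Cons sum.lessThan_Suc_shift) (auto intro!: sum.cong)
  ultimately show ?thesis by (simp add: spl_def)
qed

lemma emb_split: "emb (u @ c # v) w = emb (u @ v) w + spl u v c w"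
proof (induction u arbitrary: w)
  case Nil
  then show ?case by (simp add: emb_Cons spl_Nil1)
next
  case (Cons a u)
  show ?case
  proof (cases w)
    case Nil then show ?thesis by simp
  next
    case (Cons b w')
    then show ?thesis using Cons.IH[of w] Cons.IH[of w'] by (simp add: spl_Cons)
  qed
qed

lemma sum_Lp:
  fixes f :: "bool list \<Rightarrow> 'b :: comm_monoid_add"
  assumes "p < n"
  shows "(\<Sum>x\<in>{x \<in> L n. x ! p}. f x) = (\<Sum>u\<in>L p. \<Sum>v\<in>L (n - 1 - p). f (u @ True # v))"
proof -
  define q where "q = n - 1 - p"
  have n: "n = p + Suc q" using assms by (simp add: q_def)
  have "(\<Sum>x\<in>{x \<in> L n. x ! p}. f x) = (\<Sum>x\<in>L n. if x ! p then f x else 0)"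
    by (rule sum.inter_filter) simp
  also have "\<dots> = (\<Sum>u\<in>L p. \<Sum>v\<in>L (Suc q). if (u @ v) ! p then f (u @ v) else 0)"
    unfolding n by (rule sum_L_app)
  also have "\<dots> = (\<Sum>u\<in>L p. \<Sum>v\<in>L q. f (u @ True # v))"
    by (rule sum.cong[OF refl]) (simp add: sum_L_Suc nth_append)
  finally show ?thesis by (simp add: q_def)
qed

lemma pw2:
  "(2::real) ^ (a - b) * real (a choose b) * (2 ^ (c - e) * real (c choose e))
   = 2 ^ (a + c - (b + e)) * real (a choose b) * real (c choose e)"
proof (cases "b \<le> a \<and> e \<le> c")
  case True
  then have "a + c - (b + e) = (a - b) + (c - e)" by simp
  then show ?thesis by (simp add: power_add)
next
  case False
  then show ?thesis by auto
qed

lemma sum_T: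
  assumes "p < n"
  shows "(\<Sum>x\<in>{x \<in> L n. x ! p}. real (emb x w))
    = 2 ^ (n - length w) / 2 * real ((n - 1) choose length w)
      + (\<Sum>j<length w. if w ! j then 2 ^ (n - length w) * real (p choose j) * real ((n - 1 - p) choose (length w - 1 - j)) else 0)"
proof -
  define q where "q = n - 1 - p"
  define k where "k = length w"
  have pq: "p + q = n - 1" using assms by (simp add: q_def)
  have "(\<Sum>x\<in>{x \<in> L n. x ! p}. real (emb x w)) = (\<Sum>u\<in>L p. \<Sum>v\<in>L q. real (emb (u @ True # v) w))"
    unfolding q_def by (rule sum_Lp[OF assms])
  also have "\<dots> = (\<Sum>u\<in>L p. \<Sum>v\<in>L q. real (emb (u @ v) w)) + (\<Sum>u\<in>L p. \<Sum>v\<in>L q. real (spl u v True w))"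
    by (simp add: emb_split sum.distrib)
  also have "(\<Sum>u\<in>L p. \<Sum>v\<in>L q. real (emb (u @ v) w)) = (\<Sum>z\<in>L (p + q). real (emb z w))"
    by (rule sum_L_app[symmetric])
  also have "\<dots> = 2 ^ (n - k) / 2 * real ((n - 1) choose k)"
  proof (cases "k \<le> n - 1")
    case True
    then have "n - k = Suc (n - 1 - k)" using assms by simp
    then show ?thesis unfolding pq sum_emb k_def[symmetric] by simp
  next
    case False
    then show ?thesis unfolding pq sum_emb k_def[symmetric] by simp
  qed
  also have "(\<Sum>u\<in>L p. \<Sum>v\<in>L q. real (spl u v True w))
     = (\<Sum>u\<in>L p. \<Sum>v\<in>L q. \<Sum>j<k. if w ! j then real (emb u (take j w)) * real (emb v (drop (Suc j) w)) else 0)"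
    by (simp add: spl_def k_def if_distrib cong: if_cong)
  also have "\<dots> = (\<Sum>u\<in>L p. \<Sum>j<k. \<Sum>v\<in>L q. if w ! j then real (emb u (take j w)) * real (emb v (drop (Suc j) w)) else 0)"
    by (rule sum.cong[OF refl], rule sum.swap)
  also have "\<dots> = (\<Sum>j<k. \<Sum>u\<in>L p. \<Sum>v\<in>L q. if w ! j then real (emb u (take j w)) * real (emb v (drop (Suc j) w)) else 0)"
    by (rule sum.swap)
  also have "\<dots> = (\<Sum>j<k. if w ! j then (\<Sum>u\<in>L p. real (emb u (take j w))) * (\<Sum>v\<in>L q. real (emb v (drop (Suc j) w))) else 0)"
    by (rule sum.cong[OF refl]) (simp add: sum_product)
  also have "\<dots> = (\<Sum>j<k. if w ! j then 2 ^ (n - k) * real (p choose j) * real (q choose (k - 1 - j)) else 0)"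
  proof (rule sum.cong[OF refl])
    fix j assume "j \<in> {..<k}"
    then have j: "j < k" by simp
    have e: "p + q - (j + (k - 1 - j)) = n - k" using j pq by simp
    have l1: "length (take j w) = j" "length (drop (Suc j) w) = k - 1 - j" using j by (simp_all add: k_def)
    have "(\<Sum>u\<in>L p. real (emb u (take j w))) * (\<Sum>v\<in>L q. real (emb v (drop (Suc j) w)))
       = 2 ^ (n - k) * real (p choose j) * real (q choose (k - 1 - j))"
      unfolding sum_emb l1 pw2 e by (rule refl)
    then show "(if w ! j then (\<Sum>u\<in>L p. real (emb u (take j w))) * (\<Sum>v\<in>L q. real (emb v (drop (Suc j) w))) else 0)
      = (if w ! j then 2 ^ (n - k) * real (p choose j) * real (q choose (k - 1 - j)) else 0)"
      by simp
  qed
  finally show ?thesis unfolding k_def q_def .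
qed



lemma L_ne: "L n \<noteq> {}"
proof -
  have "replicate n True \<in> L n" by simp
  then show ?thesis by blast
qed

lemma set_joint: "set_pmf (joint d n t) \<subseteq> {(x, ys). length x = n}"
  unfolding joint_def using L_ne by (auto simp: set_pmf_of_set)

lemma pmf_joint:
  assumes "length x = n"
  shows "pmf (joint d n t) (x, y) = pmf (traces d t x) y / real (card (L n))"
proof -
  have "pmf (joint d n t) (x, y) = (\<Sum>x'\<in>L n. pmf (traces d t x' \<bind> (\<lambda>ys. return_pmf (x', ys))) (x, y)) / real (card (L n))"
    unfolding joint_def by (rule pmf_bind_pmf_of_set[OF L_ne finite_L])
  also have "(\<Sum>x'\<in>L n. pmf (traces d t x' \<bind> (\<lambda>ys. return_pmf (x', ys))) (x, y))
      = (\<Sum>x'\<in>L n. if x' = x then pmf (traces d t x) y else 0)"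
  proof (rule sum.cong[OF refl])
    fix x'
    have e: "\<And>z. traces d t z \<bind> (\<lambda>ys. return_pmf (z, ys)) = map_pmf (Pair z) (traces d t z)"
      by (simp add: map_pmf_def)
    show "pmf (traces d t x' \<bind> (\<lambda>ys. return_pmf (x', ys))) (x, y) = (if x' = x then pmf (traces d t x) y else 0)"
    proof (cases "x' = x")
      case True
      have inj: "inj (Pair x)" by (auto simp: inj_def)
      show ?thesis unfolding True e if_P[OF refl] by (rule pmf_map_inj'[OF inj])
    next
      case False
      then have "(x, y) \<notin> set_pmf (map_pmf (Pair x') (traces d t x'))" by auto
      then show ?thesis unfolding e using False by (simp add: pmf_eq_0_set_pmf)
    qed
  qed
  also have "\<dots> = pmf (traces d t x) y" using assms by (simp add: sum.delta')
  finally show ?thesis .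
qed

lemma prob_joint:
  "measure_pmf.prob (joint d n t) {(x, ys). P x \<and> ys = y}
   = (\<Sum>x\<in>{x \<in> L n. P x}. pmf (traces d t x) y) / real (card (L n))"
proof -
  define M where "M = joint d n t"
  define A where "A = {(x, ys). P x \<and> ys = y}"
  define B where "B = (\<lambda>x. (x, y)) ` {x \<in> L n. P x}"
  have "A \<inter> set_pmf M = B \<inter> set_pmf M"
    using set_joint[of d n t] unfolding A_def B_def M_def by auto
  then have "measure_pmf.prob M A = measure_pmf.prob M B"
    by (metis measure_Int_set_pmf)
  also have "\<dots> = sum (pmf M) B"
    by (rule measure_measure_pmf_finite) (simp add: B_def)
  also have "\<dots> = (\<Sum>x\<in>{x \<in> L n. P x}. pmf M (x, y))"
    unfolding B_def by (rule sum.reindex_cong[where l = "\<lambda>x. (x, y)"]) (auto simp: inj_on_def)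
  also have "\<dots> = (\<Sum>x\<in>{x \<in> L n. P x}. pmf (traces d t x) y / real (card (L n)))"
    unfolding M_def by (rule sum.cong[OF refl]) (simp add: pmf_joint)
  finally show ?thesis unfolding A_def M_def by (simp add: sum_divide_distrib)
qed

lemma den_sum:
  "(\<Sum>x\<in>L n. \<Sum>w\<in>{w :: bool list. length w \<le> n}. real (infil y w) * real (emb x w))
   = (\<Sum>k = 0..n. (2::real) ^ (n - k) * real (n choose k) * (\<Sum>w \<in> {w :: bool list. length w = k}. real (infil y w)))"
proof -
  have "(\<Sum>x\<in>L n. \<Sum>w\<in>{w :: bool list. length w \<le> n}. real (infil y w) * real (emb x w))
      = (\<Sum>w\<in>{w :: bool list. length w \<le> n}. \<Sum>x\<in>L n. real (infil y w) * real (emb x w))"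
    by (rule sum.swap)
  also have "\<dots> = (\<Sum>w\<in>{w :: bool list. length w \<le> n}. real (infil y w) * (2 ^ (n - length w) * real (n choose length w)))"
    by (simp add: sum_distrib_left[symmetric] sum_emb)
  also have "\<dots> = (\<Sum>k = 0..n. \<Sum>w\<in>L k. real (infil y w) * (2 ^ (n - length w) * real (n choose length w)))"
    by (rule sum_Lle)
  also have "\<dots> = (\<Sum>k = 0..n. (2::real) ^ (n - k) * real (n choose k) * (\<Sum>w \<in> {w :: bool list. length w = k}. real (infil y w)))"
    by (rule sum.cong[OF refl]) (simp add: sum_distrib_left mult.commute)
  finally show ?thesis .
qed

lemma num_sum:
  assumes "p < n"
  shows "(\<Sum>x\<in>{x \<in> L n. x ! p}. \<Sum>w\<in>{w :: bool list. length w \<le> n}. real (infil y w) * real (emb x w))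
   = (\<Sum>k = 0..n. (2::real) ^ (n - k) / 2 * real ((n - 1) choose k)
              * (\<Sum>w \<in> {w :: bool list. length w = k}. real (infil y w)))
     + (\<Sum>k = 0..n. \<Sum>j<k. (2::real) ^ (n - k)
              * real (p choose j) * real ((n - 1 - p) choose (k - 1 - j))
              * (\<Sum>w \<in> {w :: bool list. length w = k \<and> w ! j}. real (infil y w)))"
proof -
  define T where "T w = 2 ^ (n - length w) / 2 * real ((n - 1) choose length w)
      + (\<Sum>j<length w. if w ! j then 2 ^ (n - length w) * real (p choose j) * real ((n - 1 - p) choose (length w - 1 - j)) else 0)" for w :: "bool list"
  have "(\<Sum>x\<in>{x \<in> L n. x ! p}. \<Sum>w\<in>{w :: bool list. length w \<le> n}. real (infil y w) * real (emb x w))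
      = (\<Sum>w\<in>{w :: bool list. length w \<le> n}. \<Sum>x\<in>{x \<in> L n. x ! p}. real (infil y w) * real (emb x w))"
    by (rule sum.swap)
  also have "\<dots> = (\<Sum>w\<in>{w :: bool list. length w \<le> n}. real (infil y w) * T w)"
  proof (rule sum.cong[OF refl])
    fix w :: "bool list"
    have "(\<Sum>x\<in>{x \<in> L n. x ! p}. real (infil y w) * real (emb x w)) = real (infil y w) * (\<Sum>x\<in>{x \<in> L n. x ! p}. real (emb x w))"
      by (rule sum_distrib_left[symmetric])
    also have "\<dots> = real (infil y w) * T w" unfolding sum_T[OF assms] T_def by (rule refl)
    finally show "(\<Sum>x\<in>{x \<in> L n. x ! p}. real (infil y w) * real (emb x w)) = real (infil y w) * T w" .
  qed
  also have "\<dots> = (\<Sum>k = 0..n. \<Sum>w\<in>L k. real (infil y w) * T w)"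
    by (rule sum_Lle)
  also have "\<dots> = (\<Sum>k = 0..n. (2::real) ^ (n - k) / 2 * real ((n - 1) choose k)
              * (\<Sum>w \<in> {w :: bool list. length w = k}. real (infil y w))
     + (\<Sum>j<k. (2::real) ^ (n - k)
              * real (p choose j) * real ((n - 1 - p) choose (k - 1 - j))
              * (\<Sum>w \<in> {w :: bool list. length w = k \<and> w ! j}. real (infil y w))))"
  proof (rule sum.cong[OF refl])
    fix k
    define c where "c j = (2::real) ^ (n - k) * real (p choose j) * real ((n - 1 - p) choose (k - 1 - j))" for j
    have "(\<Sum>w\<in>L k. real (infil y w) * T w)
       = (\<Sum>w\<in>L k. (2 ^ (n - k) / 2 * real ((n - 1) choose k)) * real (infil y w)
            + (\<Sum>j<k. if w ! j then c j * real (infil y w) else 0))"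
      by (rule sum.cong[OF refl]) (simp add: T_def c_def algebra_simps sum_distrib_left if_distrib cong: if_cong)
    also have "\<dots> = (2 ^ (n - k) / 2 * real ((n - 1) choose k)) * (\<Sum>w\<in>L k. real (infil y w))
            + (\<Sum>j<k. \<Sum>w\<in>L k. if w ! j then c j * real (infil y w) else 0)"
      by (simp add: sum.distrib sum_distrib_left sum.swap[of _ "L k"])
    also have "(\<Sum>j<k. \<Sum>w\<in>L k. if w ! j then c j * real (infil y w) else 0)
       = (\<Sum>j<k. c j * (\<Sum>w \<in> {w :: bool list. length w = k \<and> w ! j}. real (infil y w)))"
    proof (rule sum.cong[OF refl])
      fix j
      have "(\<Sum>w\<in>L k. if w ! j then c j * real (infil y w) else 0) = (\<Sum>w\<in>{w \<in> L k. w ! j}. c j * real (infil y w))"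
        by (rule sum.inter_filter[symmetric]) simp
      also have "\<dots> = c j * (\<Sum>w \<in> {w :: bool list. length w = k \<and> w ! j}. real (infil y w))"
        by (simp add: sum_distrib_left)
      finally show "(\<Sum>w\<in>L k. if w ! j then c j * real (infil y w) else 0) = c j * (\<Sum>w \<in> {w :: bool list. length w = k \<and> w ! j}. real (infil y w))" .
    qed
    finally show "(\<Sum>w\<in>L k. real (infil y w) * T w) = (2::real) ^ (n - k) / 2 * real ((n - 1) choose k)
              * (\<Sum>w \<in> {w :: bool list. length w = k}. real (infil y w))
     + (\<Sum>j<k. (2::real) ^ (n - k)
              * real (p choose j) * real ((n - 1 - p) choose (k - 1 - j))
              * (\<Sum>w \<in> {w :: bool list. length w = k \<and> w ! j}. real (infil y w)))"
      by (simp add: c_def)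
  qed
  finally show ?thesis by (simp only: sum.distrib)
qed



theorem theorem7:
  fixes d :: real and n t i :: nat and y :: "bool list list"
  assumes "0 \<le> d" and "d \<le> 1"
    and "t \<ge> 1" and "length y = t"
    and "measure_pmf.prob (joint d n t) {(x, ys). ys = y} > 0"
    and "1 \<le> i" and "i \<le> n"
  shows "measure_pmf.prob (joint d n t) {(x, ys). x ! (i - 1) \<and> ys = y}
           / measure_pmf.prob (joint d n t) {(x, ys). ys = y}
       = ((\<Sum>k = 0..n. (2::real) ^ (n - k) / 2 * real ((n - 1) choose k)
              * (\<Sum>w \<in> {w :: bool list. length w = k}. real (infil y w)))
          + (\<Sum>k = 0..n. \<Sum>j = 1..k. (2::real) ^ (n - k)
              * real ((i - 1) choose (j - 1)) * real ((n - i) choose (k - j))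
              * (\<Sum>w \<in> {w :: bool list. length w = k \<and> w ! (j - 1)}. real (infil y w))))
         / (\<Sum>k = 0..n. (2::real) ^ (n - k) * real (n choose k)
              * (\<Sum>w \<in> {w :: bool list. length w = k}. real (infil y w)))"
proof -
  define p where "p = i - 1"
  have p: "p < n" using assms by (simp add: p_def)
  define C where "C = (\<Prod>j<t. d ^ (n - length (y ! j)) * (1 - d) ^ length (y ! j))"
  define E where "E x = (\<Prod>j<t. real (emb x (y ! j)))" for x :: "bool list"
  have pt: "pmf (traces d t x) y = C * E x" if "x \<in> L n" for x
  proof -
    have "pmf (traces d t x) y = (\<Prod>j<t. d ^ (n - length (y ! j)) * (1 - d) ^ length (y ! j) * real (emb x (y ! j)))"
      using that assms(1,2,4) by (simp add: pmf_traces pmf_del_chan)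
    then show ?thesis by (simp add: C_def E_def prod.distrib)
  qed
  have Ex: "E x = (\<Sum>w\<in>{w :: bool list. length w \<le> n}. real (infil y w) * real (emb x w))" if "x \<in> L n" for x
  proof -
    have "(\<Prod>j<length y. emb x (y ! j)) = (\<Sum>w\<in>{w :: bool list. length w \<le> n}. infil y w * emb x w)"
      using that by (intro prod_infil) simp
    then have "real (\<Prod>j<length y. emb x (y ! j)) = real (\<Sum>w\<in>{w :: bool list. length w \<le> n}. infil y w * emb x w)"
      by simp
    then show ?thesis unfolding E_def of_nat_prod of_nat_sum of_nat_mult assms(4) .
  qed
  define c where "c = real (card (L n))"
  have c0: "c \<noteq> 0" using L_ne finite_L unfolding c_def by (metis card_0_eq of_nat_eq_0_iff)
  have num: "measure_pmf.prob (joint d n t) {(x, ys). x ! (i - 1) \<and> ys = y} = C * (\<Sum>x\<in>{x \<in> L n. x ! p}. E x) / c"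
    unfolding prob_joint p_def[symmetric] c_def
    by (simp add: pt sum_distrib_left)
  have den: "measure_pmf.prob (joint d n t) {(x, ys). ys = y} = C * (\<Sum>x\<in>L n. E x) / c"
    using prob_joint[of d n t "\<lambda>_. True" y] unfolding c_def by (simp add: pt sum_distrib_left)
  have C0: "C \<noteq> 0" using assms(5) unfolding den by auto
  have "measure_pmf.prob (joint d n t) {(x, ys). x ! (i - 1) \<and> ys = y}
           / measure_pmf.prob (joint d n t) {(x, ys). ys = y}
        = (\<Sum>x\<in>{x \<in> L n. x ! p}. E x) / (\<Sum>x\<in>L n. E x)"
    unfolding num den using C0 c0 by simp
  also have "(\<Sum>x\<in>L n. E x) = (\<Sum>k = 0..n. (2::real) ^ (n - k) * real (n choose k)
              * (\<Sum>w \<in> {w :: bool list. length w = k}. real (infil y w)))"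
    by (simp add: Ex den_sum)
  also have "(\<Sum>x\<in>{x \<in> L n. x ! p}. E x) = (\<Sum>k = 0..n. (2::real) ^ (n - k) / 2 * real ((n - 1) choose k)
              * (\<Sum>w \<in> {w :: bool list. length w = k}. real (infil y w)))
     + (\<Sum>k = 0..n. \<Sum>j<k. (2::real) ^ (n - k)
              * real (p choose j) * real ((n - 1 - p) choose (k - 1 - j))
              * (\<Sum>w \<in> {w :: bool list. length w = k \<and> w ! j}. real (infil y w)))"
    unfolding num_sum[OF p, symmetric] by (rule sum.cong) (simp_all add: Ex)
  also have "(\<Sum>k = 0..n. \<Sum>j<k. (2::real) ^ (n - k)
              * real (p choose j) * real ((n - 1 - p) choose (k - 1 - j))
              * (\<Sum>w \<in> {w :: bool list. length w = k \<and> w ! j}. real (infil y w)))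
     = (\<Sum>k = 0..n. \<Sum>j = 1..k. (2::real) ^ (n - k)
              * real ((i - 1) choose (j - 1)) * real ((n - i) choose (k - j))
              * (\<Sum>w \<in> {w :: bool list. length w = k \<and> w ! (j - 1)}. real (infil y w)))"
  proof (rule sum.cong[OF refl])
    fix k
    have ni: "n - i = n - 1 - p" using assms(6) by (simp add: p_def)
    show "(\<Sum>j<k. (2::real) ^ (n - k)
              * real (p choose j) * real ((n - 1 - p) choose (k - 1 - j))
              * (\<Sum>w \<in> {w :: bool list. length w = k \<and> w ! j}. real (infil y w)))
       = (\<Sum>j = 1..k. (2::real) ^ (n - k)
              * real ((i - 1) choose (j - 1)) * real ((n - i) choose (k - j))
              * (\<Sum>w \<in> {w :: bool list. length w = k \<and> w ! (j - 1)}. real (infil y w)))"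
      unfolding One_nat_def sum.atLeast1_atMost_eq ni by (simp add: p_def)
  qed
  finally show ?thesis .
qed

end
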